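(* Let $\Sigma=(X,U,F)$ be a system, $Q\subset X$ a controlled invariant set, and $V\subset U$ a finite cover of $Q$ such that: (C.1) $Q_a\cap Q_b=\emptyset$ for all distinct $a,b\in V$; (C.2) for all $a,b\in V$ with $M_{ab}=1$ there exists $K\subset Q_a$ such that $Q_b\subset F(K,a)$; (C.3) $Q_c=\emptyset$ for every $c\in U\setminus V$. Let $\mathcal{A}_V=\{Q_a:a\in V\}$ and $G_V:\mathcal{A}_V\to U$, $G_V(Q_a)=a$. Then \[h^{fb}_{inv}(Q)=\inf\{h_{inv}(\mathcal{B},G_{\mathcal{B}}):(\mathcal{B},G_{\mathcal{B}})\text{ is a refinement of }(\mathcal{A}_V,G_V)\}.\]
   Context: A system is a triple $\Sigma=(X,U,F)$ where $X,U$ are nonempty sets and $F:X\times U\rightrightarrows X$ is a set-valued map with $F(x,u)\neq\emptyset$ for all $(x,u)$; for $A\subset X$, $F(A,u)=\bigcup_{x\in A}F(x,u)$. $Q\subset X$ is controlled invariant if for every $x\in Q$ there is $u\in U$ with $F(x,u)\subset Q$. For $u\in U$ put $Q_u=\{x\in Q:F(x,u)\subset Q\}$. A set $V\subset U$ is a cover of $Q$ if $Q\subset\bigcup_{a\in V}Q_a$; the admissible matrix $M_{Q,V}=(M_{ab})_{a,b\in V}$ has $M_{ab}=1$ if there exists $x\in Q_a$ with $F(x,a)\cap Q_b\neq\emptyset$, and $0$ otherwise. An invariant cover of $Q$ is a pair $(\mathcal{A},G)$ where $\mathcal{A}$ is a finite cover of $Q$ (by subsets of $Q$) and $G:\mathcal{A}\to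 U$ satisfies $F(A,G(A))\subset Q$ for all $A\in\mathcal{A}$. For $\mathcal{S}\subset\mathcal{A}^n$, $\alpha=\alpha(0)\cdots\alpha(n-1)\in\mathcal{S}$ and integer $0\le t<n-1$, let $P(\alpha|_{[0,t]})=\{A\in\mathcal{A}:\exists\hat\alpha\in\mathcal{S},\ \hat\alpha|_{[0,t]}=\alpha|_{[0,t]},\ A=\hat\alpha(t+1)\}$, and $P(\alpha|_{[0,n-1]})=P(\alpha)=\{\hat\alpha(0):\hat\alpha\in\mathcal{S}\}$. $\mathcal{S}$ is $(n,Q)$-spanning in $(\mathcal{A},G)$ if (1) the elements of $P(\alpha)$ cover $Q$, and (2) for every $\alpha\in\mathcal{S}$ and $0\le t<n-1$, $F(\alpha(t),G(\alpha(t)))\subset\bigcup_{A'\in P(\alpha|_{[0,t]})}A'$. Let $N(\mathcal{S})=\max_{\alpha\in\mathcal{S}}\prod_{t=0}^{n-1}\sharp P(\alpha|_{[0,t]})$, $r_{inv}(n,Q,\mathcal{A},G)=\min\{N(\mathcal{S}):\mathcal{S}\ (n,Q)\text{-spanning in }(\mathcal{A},G)\}$, $h_{inv}(\mathcal{A},G)=\lim_{n\to\infty}\frac1n\log r_{inv}(n,Q,\mathcal{A},G)$ ($\log$ base $2$), and the invariance feedback entropy $h^{fb}_{inv}(Q)=\inf_{(\mathcal{A},G)}h_{inv}(\mathcal{A},G)$ over all invariant covers of $Q$. A refinement of $(\mathcal{A}_V,G_V)$ is a pair $(\mathcal{B},G_{\mathcal{B}})$ where $\mathcal{B}$ is a finite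 cover of $Q$, every $B\in\mathcal{B}$ is contained in some $A\in\mathcal{A}_V$, and $G_{\mathcal{B}}(B)=G_V(A)$ for such $A$. *)

theory Defs
  imports Complex_Main
begin

text \<open>A system (X,U,F) with X = UNIV :: 'x set, U = UNIV :: 'u set,
  F :: 'x => 'u => 'x set (set-valued map).\<close>

definition is_system :: "('x \<Rightarrow> 'u \<Rightarrow> 'x set) \<Rightarrow> bool" where
  "is_system F \<longleftrightarrow> (\<forall>x u. F x u \<noteq> {})"

definition Fset :: "('x \<Rightarrow> 'u \<Rightarrow> 'x set) \<Rightarrow> 'x set \<Rightarrow> 'u \<Rightarrow> 'x set" where
  "Fset F A u = (\<Union>x\<in>A. F x u)"

definition controlled_invariant :: "('x \<Rightarrow> 'u \<Rightarrow> 'x set) \<Rightarrow> 'x set \<Rightarrow> bool" where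
  "controlled_invariant F Q \<longleftrightarrow> (\<forall>x\<in>Q. \<exists>u. F x u \<subseteq> Q)"

definition Qu :: "('x \<Rightarrow> 'u \<Rightarrow> 'x set) \<Rightarrow> 'x set \<Rightarrow> 'u \<Rightarrow> 'x set" where
  "Qu F Q u = {x \<in> Q. F x u \<subseteq> Q}"

definition is_cover :: "('x \<Rightarrow> 'u \<Rightarrow> 'x set) \<Rightarrow> 'x set \<Rightarrow> 'u set \<Rightarrow> bool" where
  "is_cover F Q V \<longleftrightarrow> Q \<subseteq> (\<Union>a\<in>V. Qu F Q a)"

text \<open>Admissible matrix entry M_ab = 1 (as a boolean).\<close>
definition adm_matrix :: "('x \<Rightarrow> 'u \<Rightarrow> 'x set) \<Rightarrow> 'x set \<Rightarrow> 'u \<Rightarrow> 'u \<Rightarrow> bool" where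
  "adm_matrix F Q a b \<longleftrightarrow> (\<exists>x\<in>Qu F Q a. F x a \<inter> Qu F Q b \<noteq> {})"

definition invariant_cover ::
  "('x \<Rightarrow> 'u \<Rightarrow> 'x set) \<Rightarrow> 'x set \<Rightarrow> 'x set set \<Rightarrow> ('x set \<Rightarrow> 'u) \<Rightarrow> bool" where
  "invariant_cover F Q \<A> G \<longleftrightarrow> finite \<A> \<and> (\<forall>A\<in>\<A>. A \<subseteq> Q) \<and> Q \<subseteq> \<Union>\<A>
     \<and> (\<forall>A\<in>\<A>. Fset F A (G A) \<subseteq> Q)"

text \<open>Sequences alpha in A^n are lists of length n (alpha(t) = alpha ! t).
  Pset S n alpha t is P(alpha|_[0,t]); for t = n-1 it is P(alpha).\<close>
definition Pset :: "'x set list set \<Rightarrow> nat \<Rightarrow> 'x set list \<Rightarrow> nat \<Rightarrow> 'x set set" where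
  "Pset S n \<alpha> t =
     (if t < n - 1
      then {A. \<exists>\<beta>\<in>S. take (t+1) \<beta> = take (t+1) \<alpha> \<and> A = \<beta> ! (t+1)}
      else {\<beta> ! 0 | \<beta>. \<beta> \<in> S})"

definition spanning ::
  "('x \<Rightarrow> 'u \<Rightarrow> 'x set) \<Rightarrow> 'x set \<Rightarrow> 'x set set \<Rightarrow> ('x set \<Rightarrow> 'u) \<Rightarrow> nat
    \<Rightarrow> 'x set list set \<Rightarrow> bool" where
  "spanning F Q \<A> G n S \<longleftrightarrow>
     (\<forall>\<alpha>\<in>S. length \<alpha> = n \<and> set \<alpha> \<subseteq> \<A>)
     \<and> Q \<subseteq> \<Union>(Pset S n [] (n - 1))
     \<and> (\<forall>\<alpha>\<in>S. \<forall>t. t < n - 1 \<longrightarrow>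
           Fset F (\<alpha> ! t) (G (\<alpha> ! t)) \<subseteq> \<Union>(Pset S n \<alpha> t))"

definition Nspan :: "nat \<Rightarrow> 'x set list set \<Rightarrow> nat" where
  "Nspan n S = Max (insert 0 ((\<lambda>\<alpha>. \<Prod>t<n. card (Pset S n \<alpha> t)) ` S))"

definition r_inv ::
  "('x \<Rightarrow> 'u \<Rightarrow> 'x set) \<Rightarrow> 'x set \<Rightarrow> nat \<Rightarrow> 'x set set \<Rightarrow> ('x set \<Rightarrow> 'u) \<Rightarrow> nat" where
  "r_inv F Q n \<A> G = Inf {Nspan n S | S. spanning F Q \<A> G n S}"

definition h_inv ::
  "('x \<Rightarrow> 'u \<Rightarrow> 'x set) \<Rightarrow> 'x set \<Rightarrow> 'x set set \<Rightarrow> ('x set \<Rightarrow> 'u) \<Rightarrow> real" where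
  "h_inv F Q \<A> G = lim (\<lambda>n. log 2 (real (r_inv F Q n \<A> G)) / real n)"

definition hfb_inv :: "('x \<Rightarrow> 'u \<Rightarrow> 'x set) \<Rightarrow> 'x set \<Rightarrow> real" where
  "hfb_inv F Q = Inf {h_inv F Q \<A> G | \<A> G. invariant_cover F Q \<A> G}"

definition AV :: "('x \<Rightarrow> 'u \<Rightarrow> 'x set) \<Rightarrow> 'x set \<Rightarrow> 'u set \<Rightarrow> 'x set set" where
  "AV F Q V = Qu F Q ` V"

text \<open>G_V(Q_a) = a (well defined by (C.1) up to empty cells).\<close>
definition GV :: "('x \<Rightarrow> 'u \<Rightarrow> 'x set) \<Rightarrow> 'x set \<Rightarrow> 'u set \<Rightarrow> 'x set \<Rightarrow> 'u" where
  "GV F Q V A = (SOME a. a \<in> V \<and> A = Qu F Q a)"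

definition refinement ::
  "'x set \<Rightarrow> 'x set set \<Rightarrow> ('x set \<Rightarrow> 'u) \<Rightarrow> 'x set set \<Rightarrow> ('x set \<Rightarrow> 'u) \<Rightarrow> bool" where
  "refinement Q \<A> G \<B> GB \<longleftrightarrow> finite \<B> \<and> (\<forall>B\<in>\<B>. B \<subseteq> Q) \<and> Q \<subseteq> \<Union>\<B>
     \<and> (\<forall>B\<in>\<B>. \<exists>A\<in>\<A>. B \<subseteq> A \<and> GB B = G A)"

end

theory Submission
  imports Defs
begin

lemma h_inv_cong:
  assumes "\<And>A. Fset F A (G A) = Fset F A (G' A)"
  shows "h_inv F Q \<A> G = h_inv F Q \<A> G'"
proof -
  have "spanning F Q \<A> G n S = spanning F Q \<A> G' n S" for n S
    unfolding spanning_def using assms by simp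
  then show ?thesis unfolding h_inv_def r_inv_def by simp
qed

lemma Fset_empty: "Fset F {} u = {}"
  unfolding Fset_def by simp

lemma r_inv_Qempty:
  assumes "Q = {}"
  shows "r_inv F Q n \<A> G = 0"
proof -
  have "spanning F Q \<A> G n {}" unfolding spanning_def using assms by simp
  moreover have "Nspan n {} = 0" unfolding Nspan_def by simp
  ultimately have "(0::nat) \<in> {Nspan n S | S. spanning F Q \<A> G n S}" by force
  then show ?thesis unfolding r_inv_def by (rule cInf_eq_minimum) auto
qed

theorem corollary3p12:
  fixes F :: "'x \<Rightarrow> 'u \<Rightarrow> 'x set" and Q :: "'x set" and V :: "'u set"
  assumes "is_system F"
    and "controlled_invariant F Q"
    and "finite V" and "is_cover F Q V"
    and C1: "\<forall>a\<in>V. \<forall>b\<in>V. a \<noteq> b \<longrightarrow> Qu F Q a \<inter> Qu F Q b = {}"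
    and C2: "\<forall>a\<in>V. \<forall>b\<in>V. adm_matrix F Q a b \<longrightarrow>
               (\<exists>K. K \<subseteq> Qu F Q a \<and> Qu F Q b \<subseteq> Fset F K a)"
    and C3: "\<forall>c. c \<notin> V \<longrightarrow> Qu F Q c = {}"
  shows "hfb_inv F Q =
     Inf {h_inv F Q \<B> GB | \<B> GB. refinement Q (AV F Q V) (GV F Q V) \<B> GB}"
proof -
  let ?I = "{h_inv F Q \<A> G | \<A> G. invariant_cover F Q \<A> G}"
  let ?R = "{h_inv F Q \<B> GB | \<B> GB. refinement Q (AV F Q V) (GV F Q V) \<B> GB}"
  have "?I = ?R"
  proof (cases "V = {}")
    case True
    then have Q0: "Q = {}" using assms(4) unfolding is_cover_def by simp
    have hc: "h_inv F Q \<A> G = lim (\<lambda>n. log 2 (real 0) / real n)" for \<A> G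
      by (simp only: h_inv_def r_inv_Qempty[OF Q0])
    have "invariant_cover F Q {} G" for G unfolding invariant_cover_def using Q0 by simp
    moreover have "refinement Q (AV F Q V) (GV F Q V) {} G" for G
      unfolding refinement_def using Q0 by simp
    ultimately have "?I = {lim (\<lambda>n. log 2 (real 0) / real n)}"
      "?R = {lim (\<lambda>n. log 2 (real 0) / real n)}"
      unfolding hc by blast+
    then show ?thesis by simp
  next
    case False
    then obtain a0 where a0: "a0 \<in> V" by blast
    have GVa: "GV F Q V (Qu F Q a) \<in> V \<and> Qu F Q a = Qu F Q (GV F Q V (Qu F Q a))"
      if "a \<in> V" for a
      unfolding GV_def by (rule someI_ex) (use that in blast)
    show ?thesis
    proof (intro set_eqI iffI)
      fix h assume "h \<in> ?R"
      then obtain \<B> GB where h: "h = h_inv F Q \<B> GB" and r: "refinement Q (AV F Q V) (GV F Q V) \<B> GB"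
        by blast
      have "invariant_cover F Q \<B> GB"
        unfolding invariant_cover_def
      proof (intro conjI ballI)
        fix B assume B: "B \<in> \<B>"
        then obtain a where a: "a \<in> V" "B \<subseteq> Qu F Q a" "GB B = GV F Q V (Qu F Q a)"
          using r unfolding refinement_def AV_def by blast
        then have "B \<subseteq> Qu F Q (GB B)" using GVa[OF a(1)] by simp
        then show "Fset F B (GB B) \<subseteq> Q" unfolding Fset_def Qu_def by blast
      qed (use r in \<open>auto simp: refinement_def\<close>)
      then show "h \<in> ?I" using h by blast
    next
      fix h assume "h \<in> ?I"
      then obtain \<A> G where h: "h = h_inv F Q \<A> G" and ic: "invariant_cover F Q \<A> G"
        by blast
      define G' where "G' = (\<lambda>A. if A = {} then GV F Q V (Qu F Q a0) else G A)"
      have "h_inv F Q \<A> G = h_inv F Q \<A> G'"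
        by (rule h_inv_cong) (simp add: G'_def Fset_empty)
      moreover have "refinement Q (AV F Q V) (GV F Q V) \<A> G'"
        unfolding refinement_def
      proof (intro conjI ballI)
        fix A assume A: "A \<in> \<A>"
        show "\<exists>A'\<in>AV F Q V. A \<subseteq> A' \<and> G' A = GV F Q V A'"
        proof (cases "A = {}")
          case True
          then show ?thesis using a0 unfolding AV_def G'_def by auto
        next
          case False
          let ?u = "G A"
          have sub: "A \<subseteq> Qu F Q ?u" using ic A unfolding invariant_cover_def Qu_def Fset_def
            by blast
          then have ne: "Qu F Q ?u \<noteq> {}" using False by blast
          then have uV: "?u \<in> V" using C3 by blast
          have "GV F Q V (Qu F Q ?u) = ?u"
          proof (rule ccontr)
            assume nq: "GV F Q V (Qu F Q ?u) \<noteq> ?u"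
            have "Qu F Q (GV F Q V (Qu F Q ?u)) \<inter> Qu F Q ?u = {}"
              using C1 GVa[OF uV] uV nq by blast
            then show False using GVa[OF uV] ne by simp
          qed
          then show ?thesis using sub uV False unfolding AV_def G'_def by auto
        qed
      qed (use ic in \<open>auto simp: invariant_cover_def\<close>)
      ultimately show "h \<in> ?R" using h by blast
    qed
  qed
  then show ?thesis unfolding hfb_inv_def by simp
qed

end
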